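(* Let $M=\mathbb{R}^2/\mathbb{Z}^2$ with its standard flat distance $d$, and for $n\geq1$ equip $M^n$ with the distance $\ell^\infty(x,y)=\max_{0\leq i\leq n-1}d(x_i,y_i)$. Then for every $0<\varepsilon<1/2$, $\mathrm{widim}_\varepsilon(M^n,\ell^\infty)=2n$.
   Context: The order of an open cover is the largest $m\geq0$ such that some $m+1$ distinct members have nonempty intersection; $\mathrm{widim}_\varepsilon(Y,\rho)$ is the minimum order of an open cover of the compact metric space $Y$ all of whose members have $\rho$-diameter $\leq\varepsilon$. *)

theory Defs
  imports "HOL-Analysis.Analysis" "HOL-Library.Extended_Nat"
begin

definition cover_order :: "'a set set \<Rightarrow> enat" where
  "cover_order U = Sup {enat m | m. \<exists>F. F \<subseteq> U \<and> card F = Suc m \<and> \<Inter>F \<noteq> {}}"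

definition widim :: "real \<Rightarrow> 'a set \<Rightarrow> ('a \<Rightarrow> 'a \<Rightarrow> real) \<Rightarrow> enat" where
  "widim \<epsilon> Y \<rho> = (INF U \<in> {U. (\<forall>V\<in>U. openin (Metric_space.mtopology Y \<rho>) V)
                              \<and> \<Union>U = Y
                              \<and> (\<forall>V\<in>U. \<forall>x\<in>V. \<forall>y\<in>V. \<rho> x y \<le> \<epsilon>)}. cover_order U)"

text \<open>The 2-torus R^2/Z^2, represented by the fundamental domain [0,1)^2,
  with the standard flat (quotient) distance.\<close>
definition torus :: "(real \<times> real) set" where
  "torus = {0..<1} \<times> {0..<1}"

definition torus_dist :: "real \<times> real \<Rightarrow> real \<times> real \<Rightarrow> real" where
  "torus_dist p q = (INF k \<in> {(real_of_int a, real_of_int b) | a b. True}. dist p (q + k))"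

definition torus_pow :: "nat \<Rightarrow> (nat \<Rightarrow> real \<times> real) set" where
  "torus_pow n = PiE {..<n} (\<lambda>_. torus)"

definition linf_dist :: "nat \<Rightarrow> (nat \<Rightarrow> real \<times> real) \<Rightarrow> (nat \<Rightarrow> real \<times> real) \<Rightarrow> real" where
  "linf_dist n x y = Max ((\<lambda>i. torus_dist (x i) (y i)) ` {..<n})"

end

theory Submission
  imports Defs
begin


definition cd :: "real \<Rightarrow> real" where "cd x = \<bar>x - of_int (round x)\<bar>"

lemma cd_le: "cd x \<le> \<bar>x - of_int a\<bar>"
  unfolding cd_def by (rule round_diff_minimal)

lemma cd_half: "cd x \<le> 1/2"
  unfolding cd_def using of_int_round_abs_le[of x] by linarith

lemma round_add_int: "round (x + of_int k) = round x + k"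
  unfolding round_def by (metis add.commute add.left_commute floor_add_int)

lemma cd_add_int: "cd (x + of_int k) = cd x"
  unfolding cd_def by (simp add: round_add_int)

lemma lattice_mem: "(of_int a, of_int b) \<in> {(real_of_int a, real_of_int b) | a b. True}"
  by blast

lemma torus_dist_le: "torus_dist p q \<le> dist p (q + (of_int a, of_int b))"
  unfolding torus_dist_def
  by (rule cINF_lower[OF _ lattice_mem]) (auto intro: bdd_belowI[where m=0])

lemma torus_dist_ge: 
  assumes "\<And>a b. c \<le> dist p (q + (of_int a, of_int b))"
  shows "c \<le> torus_dist p q"
  unfolding torus_dist_def
  by (rule cINF_greatest) (use assms in auto)

lemma torus_dist_nonneg: "0 \<le> torus_dist p q"
  by (rule torus_dist_ge) simp

lemma dist_pair_le: "dist (x1::real, y1::real) (x2, y2) \<le> \<bar>x1 - x2\<bar> + \<bar>y1 - y2\<bar>"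
  by (simp add: dist_Pair_Pair dist_real_def sqrt_sum_squares_le_sum_abs)

lemma torus_dist_le_abs:
  "torus_dist p q \<le> \<bar>fst p - fst q - of_int a\<bar> + \<bar>snd p - snd q - of_int b\<bar>"
proof -
  have "torus_dist p q \<le> dist p (q + (of_int a, of_int b))" by (rule torus_dist_le)
  also have "\<dots> \<le> \<bar>fst p - fst q - of_int a\<bar> + \<bar>snd p - snd q - of_int b\<bar>"
    using dist_pair_le[of "fst p" "snd p" "fst q + of_int a" "snd q + of_int b"]
    by (cases p, cases q) (simp add: algebra_simps)
  finally show ?thesis .
qed

lemma torus_dist_ge_cd1: "cd (fst p - fst q) \<le> torus_dist p q"
proof (rule torus_dist_ge)
  fix a b :: int
  have "cd (fst p - fst q) \<le> \<bar>fst p - fst q - of_int a\<bar>" by (rule cd_le)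
  also have "\<dots> \<le> dist p (q + (of_int a, of_int b))"
    by (cases p, cases q) (simp add: dist_Pair_Pair dist_real_def real_le_rsqrt algebra_simps)
  finally show "cd (fst p - fst q) \<le> dist p (q + (of_int a, of_int b))" .
qed

lemma torus_dist_ge_cd2: "cd (snd p - snd q) \<le> torus_dist p q"
proof (rule torus_dist_ge)
  fix a b :: int
  have "cd (snd p - snd q) \<le> \<bar>snd p - snd q - of_int b\<bar>" by (rule cd_le)
  also have "\<dots> \<le> dist p (q + (of_int a, of_int b))"
    by (cases p, cases q) (simp add: dist_Pair_Pair dist_real_def real_le_rsqrt algebra_simps)
  finally show "cd (snd p - snd q) \<le> dist p (q + (of_int a, of_int b))" .
qed

lemma torus_dist_commute_le: "torus_dist p q \<le> torus_dist q p"
proof (rule torus_dist_ge)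
  fix a b :: int
  have "torus_dist p q \<le> dist p (q + (of_int (-a), of_int (-b)))" by (rule torus_dist_le)
  also have "\<dots> = dist q (p + (of_int a, of_int b))"
    by (cases p, cases q) (simp add: dist_Pair_Pair dist_real_def algebra_simps power2_commute)
  finally show "torus_dist p q \<le> dist q (p + (of_int a, of_int b))" .
qed

lemma torus_dist_commute: "torus_dist p q = torus_dist q p"
  by (simp add: eq_iff torus_dist_commute_le)

lemma torus_dist_triangle: "torus_dist p r \<le> torus_dist p q + torus_dist q r"
proof -
  have "torus_dist p r - dist q (r + (of_int a2, of_int b2)) \<le> torus_dist p q" for a2 b2
  proof (rule torus_dist_ge)
    fix a1 b1 :: int
    have "torus_dist p r \<le> dist p (r + (of_int (a1+a2), of_int (b1+b2)))" by (rule torus_dist_le)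
    also have "\<dots> \<le> dist p (q + (of_int a1, of_int b1)) + dist (q + (of_int a1, of_int b1)) (r + (of_int (a1+a2), of_int (b1+b2)))"
      by (rule dist_triangle)
    also have "dist (q + (of_int a1, of_int b1)) (r + (of_int (a1+a2), of_int (b1+b2))) = dist q (r + (of_int a2, of_int b2))"
      by (cases q, cases r) (simp add: dist_Pair_Pair dist_real_def algebra_simps)
    finally show "torus_dist p r - dist q (r + (of_int a2, of_int b2)) \<le> dist p (q + (of_int a1, of_int b1))" by simp
  qed
  then have "torus_dist p r - torus_dist p q \<le> dist q (r + (of_int a2, of_int b2))" for a2 b2
    by (smt (verit))
  then have "torus_dist p r - torus_dist p q \<le> torus_dist q r"
    by (rule torus_dist_ge)
  then show ?thesis by simp
qed

lemma torus_dist_refl: "torus_dist p p = 0"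
  using torus_dist_le[of p p 0 0] torus_dist_nonneg[of p p] by (simp add: zero_prod_def[symmetric])

lemma cd_zero_unit: 
  assumes "cd (x - y) = 0" "0 \<le> x" "x < 1" "0 \<le> y" "y < 1"
  shows "x = y"
proof -
  have "x - y = of_int (round (x - y))" using assms(1) unfolding cd_def by simp
  moreover have "\<bar>x - y\<bar> < 1" using assms by auto
  ultimately have "round (x - y) = 0"
  proof -
    have "\<bar>round (x - y)\<bar> < 1"
      using \<open>x - y = _\<close> \<open>\<bar>x - y\<bar> < 1\<close> by (metis of_int_abs of_int_less_1_iff)
    then show ?thesis by simp
  qed
  then show ?thesis using \<open>x - y = _\<close> by simp
qed

lemma torus_dist_zero:
  assumes "p \<in> torus" "q \<in> torus" "torus_dist p q = 0" shows "p = q"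
proof -
  have "cd (fst p - fst q) = 0" "cd (snd p - snd q) = 0"
    using torus_dist_ge_cd1[of p q] torus_dist_ge_cd2[of p q] assms(3)
    by (auto simp: cd_def)
  then show ?thesis using assms(1,2) unfolding torus_def
    by (cases p, cases q) (auto dest!: cd_zero_unit)
qed



lemma linf_ge: "i < n \<Longrightarrow> torus_dist (x i) (y i) \<le> linf_dist n x y"
  unfolding linf_dist_def by (rule Max_ge) auto

lemma linf_le_iff: "n \<ge> 1 \<Longrightarrow> linf_dist n x y \<le> c \<longleftrightarrow> (\<forall>i<n. torus_dist (x i) (y i) \<le> c)"
  unfolding linf_dist_def by (subst Max_le_iff) (auto simp: lessThan_empty_iff)

lemma linf_less_iff: "n \<ge> 1 \<Longrightarrow> linf_dist n x y < c \<longleftrightarrow> (\<forall>i<n. torus_dist (x i) (y i) < c)"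
  unfolding linf_dist_def by (subst Max_less_iff) (auto simp: lessThan_empty_iff)

lemma linf_metric: assumes "n \<ge> 1" shows "Metric_space (torus_pow n) (linf_dist n)"
proof
  fix x y
  show "0 \<le> linf_dist n x y"
    using linf_ge[of 0 n x y] torus_dist_nonneg[of "x 0" "y 0"] assms by simp
  show "linf_dist n x y = linf_dist n y x"
    unfolding linf_dist_def by (simp add: torus_dist_commute)
next
  fix x y assume xy: "x \<in> torus_pow n" "y \<in> torus_pow n"
  show "linf_dist n x y = 0 \<longleftrightarrow> x = y"
  proof
    assume h: "linf_dist n x y = 0"
    have "x i = y i" for i
    proof (cases "i < n")
      case True
      then have "torus_dist (x i) (y i) = 0"
        using linf_ge[OF True, of x y] h torus_dist_nonneg[of "x i" "y i"] by simp
      then show ?thesis using torus_dist_zero[of "x i" "y i"] xy True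
        unfolding torus_pow_def by auto
    next
      case False
      then show ?thesis using xy unfolding torus_pow_def by (auto simp: PiE_def extensional_def)
    qed
    then show "x = y" by auto
  next
    assume "x = y" then show "linf_dist n x y = 0"
    proof -
      have "(\<lambda>i. torus_dist (x i) (y i)) ` {..<n} = {0}"
        using assms \<open>x = y\<close> by (auto simp: torus_dist_refl image_iff Suc_le_eq)
      then show ?thesis unfolding linf_dist_def by simp
    qed
  qed
next
  fix x y z
  show "linf_dist n x z \<le> linf_dist n x y + linf_dist n y z"
    unfolding linf_le_iff[OF assms]
  proof (intro allI impI)
    fix i assume "i < n"
    then show "torus_dist (x i) (z i) \<le> linf_dist n x y + linf_dist n y z"
      using torus_dist_triangle[where p="x i" and q="y i" and r="z i"] \<open>i < n\<close> linf_ge[of i n x y] linf_ge[of i n y z] by linarith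
  qed
qed

definition wrapP :: "real \<times> real \<Rightarrow> real \<times> real" where
  "wrapP p = (frac (fst p), frac (snd p))"

definition Hmap :: "nat \<Rightarrow> (nat \<Rightarrow> real \<times> real) \<Rightarrow> (nat \<Rightarrow> real \<times> real)" where
  "Hmap n x = (\<lambda>i. if i < n then wrapP (x i) else undefined)"

lemma wrapP_torus: "wrapP p \<in> torus"
  unfolding wrapP_def torus_def by (simp add: frac_lt_1)

lemma torus_dist_wrapP_abs: "torus_dist (wrapP p) (wrapP q) \<le> \<bar>fst p - fst q\<bar> + \<bar>snd p - snd q\<bar>"
  using torus_dist_le_abs[of "wrapP p" "wrapP q" "\<lfloor>fst q\<rfloor> - \<lfloor>fst p\<rfloor>" "\<lfloor>snd q\<rfloor> - \<lfloor>snd p\<rfloor>"]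
  by (simp add: wrapP_def frac_def algebra_simps)

lemma torus_dist_wrapP: "torus_dist (wrapP p) (wrapP q) \<le> dist p q"
proof -
  have "torus_dist (wrapP p) (wrapP q) \<le> dist (wrapP p) (wrapP q + (of_int (\<lfloor>fst q\<rfloor> - \<lfloor>fst p\<rfloor>), of_int (\<lfloor>snd q\<rfloor> - \<lfloor>snd p\<rfloor>)))"
    by (rule torus_dist_le)
  also have "\<dots> = dist p q"
    by (cases p, cases q) (simp add: wrapP_def frac_def dist_Pair_Pair dist_real_def algebra_simps)
  finally show ?thesis .
qed



lemma Hmap_in: "Hmap n x \<in> torus_pow n"
  unfolding Hmap_def torus_pow_def by (simp add: PiE_iff extensional_def wrapP_torus)

lemma wrapP_id: "p \<in> torus \<Longrightarrow> wrapP p = p"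
  unfolding wrapP_def torus_def by (cases p) (auto simp: frac_eq)

lemma torus_compact:
  assumes n: "n \<ge> 1"
  shows "compactin (Metric_space.mtopology (torus_pow n) (linf_dist n)) (torus_pow n)"
proof -
  interpret Metric_space "torus_pow n" "linf_dist n" by (rule linf_metric[OF n])
  define PT where "PT = product_topology (\<lambda>_. (euclidean :: (real\<times>real) topology)) {..<n}"
  define S where "S = PiE {..<n} (\<lambda>_. cbox (0::real,0::real) (1,1))"
  have cS: "compactin (PT) S"
    unfolding S_def PT_def compactin_PiE by simp
  have cont: "continuous_map (PT) mtopology (Hmap n)"
    unfolding continuous_map_to_metric
  proof (intro ballI allI impI)
    fix x and e :: real assume x: "x \<in> topspace (PT)" and e: "e > 0"
    define U where "U = PiE {..<n} (\<lambda>i. ball (x i) e)"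
    have "openin (PT) U"
      unfolding U_def PT_def openin_PiE_gen by auto
    moreover have "x \<in> U" using x e unfolding U_def PT_def by (auto simp: PiE_def)
    moreover have "\<forall>y\<in>U. Hmap n y \<in> mball (Hmap n x) e"
    proof
      fix y assume y: "y \<in> U"
      have "linf_dist n (Hmap n x) (Hmap n y) < e"
        unfolding linf_less_iff[OF n]
      proof (intro allI impI)
        fix i assume i: "i < n"
        have "torus_dist (wrapP (x i)) (wrapP (y i)) \<le> dist (x i) (y i)" by (rule torus_dist_wrapP)
        also have "\<dots> < e" using y i unfolding U_def by (simp add: PiE_iff)
        finally show "torus_dist (Hmap n x i) (Hmap n y i) < e" using i by (simp add: Hmap_def)
      qed
      then show "Hmap n y \<in> mball (Hmap n x) e" by (simp add: Hmap_in)
    qed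
    ultimately show "\<exists>U. openin (PT) U \<and> x \<in> U \<and> (\<forall>y\<in>U. Hmap n y \<in> mball (Hmap n x) e)"
      by (metis (no_types, lifting))
  qed
  have img: "Hmap n ` S = torus_pow n"
  proof
    show "Hmap n ` S \<subseteq> torus_pow n" using Hmap_in by blast
    show "torus_pow n \<subseteq> Hmap n ` S"
    proof
      fix x assume x: "x \<in> torus_pow n"
      have "Hmap n x = x"
      proof
        fix i show "Hmap n x i = x i"
          using x unfolding Hmap_def torus_pow_def by (cases "i < n") (auto simp: wrapP_id PiE_iff extensional_def)
      qed
      moreover have "x \<in> S"
      proof -
        have "torus \<subseteq> cbox (0::real,0::real) (1,1)"
          unfolding torus_def cbox_Pair_eq by auto
        then show ?thesis using x unfolding S_def torus_pow_def by (auto simp: PiE_iff)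
      qed
      ultimately show "x \<in> Hmap n ` S" by (metis image_eqI)
    qed
  qed
  show ?thesis using image_compactin[OF cS cont] img by simp
qed



definition coord :: "(nat \<Rightarrow> real \<times> real) \<Rightarrow> nat \<Rightarrow> real" where
  "coord x c = (if even c then fst (x (c div 2)) else snd (x (c div 2)))"

lemma coord_cd: assumes "c < 2*n" shows "cd (coord x c - coord y c) \<le> linf_dist n x y"
proof -
  have i: "c div 2 < n" using assms by auto
  have "cd (coord x c - coord y c) \<le> torus_dist (x (c div 2)) (y (c div 2))"
    unfolding coord_def using torus_dist_ge_cd1 torus_dist_ge_cd2 by auto
  also have "\<dots> \<le> linf_dist n x y" by (rule linf_ge[OF i])
  finally show ?thesis .
qed

definition Gz :: "nat \<Rightarrow> nat \<Rightarrow> (nat \<Rightarrow> nat) \<Rightarrow> (nat \<Rightarrow> real \<times> real)" where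
  "Gz n p z = Hmap n (\<lambda>i. (real (z (2*i)) / real p, real (z (2*i+1)) / real p))"

lemma coord_Gz: "c < 2*n \<Longrightarrow> coord (Gz n p z) c = frac (real (z c) / real p)"
  unfolding Gz_def Hmap_def coord_def wrapP_def
  by (auto simp: dvd_mult_div_cancel)

lemma Gz_close:
  assumes n: "n \<ge> 1" and p: "p > 0" and cl: "\<And>c. c < 2*n \<Longrightarrow> \<bar>real (z c) - real (z' c)\<bar> \<le> 1"
    and pd: "2 / real p < \<delta>"
  shows "linf_dist n (Gz n p z) (Gz n p z') < \<delta>"
  unfolding linf_less_iff[OF n]
proof (intro allI impI)
  fix i assume i: "i < n"
  have "torus_dist (Gz n p z i) (Gz n p z' i)
     \<le> \<bar>real (z (2*i)) / real p - real (z' (2*i)) / real p\<bar> + \<bar>real (z (2*i+1)) / real p - real (z' (2*i+1)) / real p\<bar>"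
    using torus_dist_wrapP_abs[of "(real (z (2*i)) / real p, real (z (2*i+1)) / real p)" "(real (z' (2*i)) / real p, real (z' (2*i+1)) / real p)"] i unfolding Gz_def Hmap_def by simp
  also have "\<dots> = \<bar>real (z (2*i)) - real (z' (2*i))\<bar> / real p + \<bar>real (z (2*i+1)) - real (z' (2*i+1))\<bar> / real p"
    using p by (simp add: diff_divide_distrib[symmetric])
  also have "\<dots> \<le> 1 / real p + 1 / real p"
    using cl[of "2*i"] cl[of "2*i+1"] i p by (intro add_mono divide_right_mono) auto
  also have "\<dots> < \<delta>" using pd by simp
  finally show "torus_dist (Gz n p z i) (Gz n p z' i) < \<delta>" .
qed

lemma Gz_in: "Gz n p z \<in> torus_pow n"
  unfolding Gz_def by (rule Hmap_in)



lemma int_abs_less1: "\<bar>real_of_int k\<bar> < 1 \<Longrightarrow> k = 0"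
proof -
  assume "\<bar>real_of_int k\<bar> < 1"
  then have "\<bar>k\<bar> < 1" by (metis of_int_abs of_int_less_1_iff)
  then show ?thesis by simp
qed

lemma lower_bound:
  fixes n :: nat and \<epsilon> :: real and U :: "(nat \<Rightarrow> real \<times> real) set set"
  assumes n: "n \<ge> 1" and e0: "0 < \<epsilon>" and e1: "\<epsilon> < 1/2"
    and op: "\<forall>V\<in>U. openin (Metric_space.mtopology (torus_pow n) (linf_dist n)) V"
    and un: "\<Union>U = torus_pow n"
    and dm: "\<forall>V\<in>U. \<forall>x\<in>V. \<forall>y\<in>V. linf_dist n x y \<le> \<epsilon>"
  shows "enat (2*n) \<le> cover_order U"
proof -
  interpret Metric_space "torus_pow n" "linf_dist n" by (rule linf_metric[OF n])
  have "\<exists>\<delta>>0. \<forall>x \<in> torus_pow n. \<exists>V \<in> U. mball x \<delta> \<subseteq> V"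
    by (rule lebesgue_number[OF torus_compact[OF n]]) (use op un in auto)
  then obtain \<delta> where d0: "\<delta> > 0" and leb: "\<forall>x \<in> torus_pow n. \<exists>V \<in> U. mball x \<delta> \<subseteq> V"
    by blast
  obtain p :: nat where pbig: "real p > max (2/\<delta>) (1/(1 - 2*\<epsilon>))"
    using reals_Archimedean2 by blast
  have "2/\<delta> > 0" using d0 by simp
  then have "real p > 0" using pbig by linarith
  then have p0: "p > 0" by simp
  have pd: "2 / real p < \<delta>" using pbig d0 p0 by (simp add: field_simps)
  have pe: "1 / real p < 1 - 2*\<epsilon>" using pbig e1 p0 by (simp add: field_simps)
  define G where "G = Gz n p"
  define Vz where "Vz z = (SOME V. V \<in> U \<and> mball (G z) \<delta> \<subseteq> V)" for z
  have Vz: "Vz z \<in> U \<and> mball (G z) \<delta> \<subseteq> Vz z" for z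
    unfolding Vz_def by (rule someI_ex) (metis G_def Gz_in leb)
  have GinV: "G z \<in> Vz z" for z
    using Vz[of z] d0 Gz_in[of n p z] unfolding G_def by auto
  define anc where "anc V = (SOME a. a \<in> V)" for V :: "(nat \<Rightarrow> real \<times> real) set"
  have anc: "anc (Vz z) \<in> Vz z" for z
    unfolding anc_def by (rule someI[where P="\<lambda>a. a \<in> Vz z", OF GinV])
  define ell where "ell z c = coord (anc (Vz z)) c + of_int (round (real (z c) / real p - coord (anc (Vz z)) c))" for z c
  define lab where "lab z c = (if c < 2*n \<and> ell z c \<ge> 1/2 then 1 else (0::nat))" for z c
  have K1: "\<bar>ell z c - real (z c) / real p\<bar> \<le> \<epsilon>" if c: "c < 2*n" for z c
  proof -
    define A where "A = coord (anc (Vz z)) c"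
    define t where "t = real (z c) / real p"
    have "\<bar>ell z c - t\<bar> = cd (t - A)"
      unfolding ell_def cd_def A_def t_def by simp
    also have "t - A = (frac t - A) + of_int \<lfloor>t\<rfloor>" by (simp add: frac_def)
    also have "cd \<dots> = cd (frac t - A)" by (rule cd_add_int)
    also have "frac t = coord (G z) c" using coord_Gz[OF c] unfolding G_def t_def by simp
    also have "cd (coord (G z) c - A) \<le> linf_dist n (G z) (anc (Vz z))"
      unfolding A_def by (rule coord_cd[OF c])
    also have "\<dots> \<le> \<epsilon>" using dm Vz[of z] GinV[of z] anc[of z] by blast
    finally show ?thesis unfolding t_def .
  qed
  have K2: "ell z c = ell z' c"
    if c: "c < 2*n" and same: "Vz z = Vz z'" and cl: "\<bar>real (z c) - real (z' c)\<bar> \<le> 1" for z z' c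
  proof -
    define A where "A = coord (anc (Vz z)) c"
    have eq: "ell z c - ell z' c = of_int (round (real (z c) / real p - A) - round (real (z' c) / real p - A))"
      unfolding ell_def A_def same by simp
    have "\<bar>real (z c) / real p - real (z' c) / real p\<bar> \<le> 1 / real p"
      using cl p0 by (simp add: diff_divide_distrib[symmetric] divide_right_mono)
    then have "\<bar>ell z c - ell z' c\<bar> < 1"
      using K1[OF c, of z] K1[OF c, of z'] pe by linarith
    then have "round (real (z c) / real p - A) - round (real (z' c) / real p - A) = 0"
      using eq by (intro int_abs_less1) simp
    then show ?thesis using eq by simp
  qed
  have hyp0: "\<forall>x j. (\<forall>j. x j \<le> p) \<and> j < 2*n \<and> x j = 0 \<longrightarrow> lab x j = 0"
  proof (intro allI impI)
    fix x j assume h: "(\<forall>j. x j \<le> p) \<and> j < 2*n \<and> x j = 0"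
    then have "\<bar>ell x j\<bar> \<le> \<epsilon>" using K1[of j x] by simp
    then show "lab x j = 0" unfolding lab_def using e1 by auto
  qed
  have hyp1: "\<forall>x j. (\<forall>j. x j \<le> p) \<and> j < 2*n \<and> x j = p \<longrightarrow> lab x j = 1"
  proof (intro allI impI)
    fix x j assume h: "(\<forall>j. x j \<le> p) \<and> j < 2*n \<and> x j = p"
    then have "\<bar>ell x j - 1\<bar> \<le> \<epsilon>" using K1[of j x] p0 by simp
    then show "lab x j = 1" unfolding lab_def using e1 h by auto
  qed
  have "odd (card {s. ksimplex p (2*n) s \<and> (reduced (2*n) \<circ> lab) ` s = {..2*n}})"
    by (rule kuhn_combinatorial[OF p0 hyp0 hyp1])
  then obtain s where ks: "ksimplex p (2*n) s" and rl: "(reduced (2*n) \<circ> lab) ` s = {..2*n}"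
    using odd_card_imp_not_empty by force
  from ks obtain base upd where kss: "kuhn_simplex p (2*n) base upd s"
    by (auto elim: ksimplex.cases)
  have close: "\<bar>real (u c) - real (v c)\<bar> \<le> 1" if "u \<in> s" "v \<in> s" for u v c
    using kuhn_simplex.base_le[OF kss that(1), of c] kuhn_simplex.le_Suc_base[OF kss that(1), of c]
      kuhn_simplex.base_le[OF kss that(2), of c] kuhn_simplex.le_Suc_base[OF kss that(2), of c]
    by linarith
  have labeq: "lab u = lab v" if "u \<in> s" "v \<in> s" "Vz u = Vz v" for u v
  proof
    fix c show "lab u c = lab v c"
      using K2[of c u v] that close[OF that(1,2), of c] unfolding lab_def by auto
  qed
  have "\<forall>j\<in>{..2*n}. \<exists>u\<in>s. reduced (2*n) (lab u) = j"
  proof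
    fix j assume "j \<in> {..2*n}"
    then have "j \<in> (reduced (2*n) \<circ> lab) ` s" using rl by simp
    then obtain u where "u \<in> s" "j = (reduced (2*n) \<circ> lab) u" by (rule imageE)
    then show "\<exists>u\<in>s. reduced (2*n) (lab u) = j" by auto
  qed
  then obtain w where w: "\<And>j. j \<in> {..2*n} \<Longrightarrow> w j \<in> s \<and> reduced (2*n) (lab (w j)) = j"
    by metis
  define F where "F = (\<lambda>j. Vz (w j)) ` {..2*n}"
  have inj: "inj_on (\<lambda>j. Vz (w j)) {..2*n}"
  proof (rule inj_onI)
    fix j j' assume j: "j \<in> {..2*n}" "j' \<in> {..2*n}" and eq: "Vz (w j) = Vz (w j')"
    then have "lab (w j) = lab (w j')" using w labeq by blast
    then show "j = j'" using w[OF j(1)] w[OF j(2)] by metis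
  qed
  have cardF: "card F = Suc (2*n)"
    unfolding F_def using card_image[OF inj] by simp
  have FU: "F \<subseteq> U" unfolding F_def using Vz by auto
  have w0: "w 0 \<in> s" using w[of 0] by simp
  have "G (w 0) \<in> \<Inter>F"
  proof -
    have "G (w 0) \<in> Vz (w j)" if j: "j \<in> {..2*n}" for j
    proof -
      have wj: "w j \<in> s" using w[OF j] by simp
      have "linf_dist n (G (w j)) (G (w 0)) < \<delta>"
        unfolding G_def by (rule Gz_close[OF n p0 _ pd]) (use close[OF wj w0] in auto)
      then have "G (w 0) \<in> mball (G (w j)) \<delta>" using Gz_in unfolding G_def by auto
      then show ?thesis using Vz[of "w j"] by blast
    qed
    then show ?thesis unfolding F_def by auto
  qed
  then have "\<Inter>F \<noteq> {}" by auto
  then show ?thesis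
    unfolding cover_order_def using FU cardF by (intro Sup_upper) blast
qed



lemma coord_even: "coord x (2*i) = fst (x i)" unfolding coord_def by simp
lemma coord_odd: "coord x (2*i+1) = snd (x i)" unfolding coord_def by simp

definition th :: "nat \<Rightarrow> nat \<Rightarrow> real" where "th d j = real j / real (d+1)"
definition hh :: "nat \<Rightarrow> real" where "hh d = 1 / (2 * real (d+1))"

definition Wset :: "nat \<Rightarrow> nat \<Rightarrow> nat \<Rightarrow> (nat \<Rightarrow> int) \<Rightarrow> (nat \<Rightarrow> real \<times> real) set" where
  "Wset n m j k = {x \<in> torus_pow n. \<forall>c<2*n.
      \<lfloor>real m * coord x c - th (2*n) j\<rfloor> mod int m = k c \<and> frac (real m * coord x c - th (2*n) j) > hh (2*n)}"

lemma bad_unique: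
  fixes y :: real
  assumes j: "j1 < j2" "j2 \<le> d"
    and b1: "frac (y - th d j1) \<le> hh d" and b2: "frac (y - th d j2) \<le> hh d"
  shows False
proof -
  define N where "N = \<lfloor>y - th d j1\<rfloor> - \<lfloor>y - th d j2\<rfloor>"
  have e: "th d j2 - th d j1 = frac (y - th d j1) - frac (y - th d j2) + of_int N"
    unfolding N_def frac_def by simp
  have "th d j2 - th d j1 = real (j2 - j1) / real (d+1)"
    unfolding th_def using j by (simp add: diff_divide_distrib of_nat_diff)
  moreover have "1 \<le> real (j2 - j1)" "real (j2 - j1) \<le> real d" using j by auto
  ultimately have lo: "th d j2 - th d j1 \<ge> 1 / real (d+1)" and hi: "th d j2 - th d j1 \<le> real d / real (d+1)"
    by (simp_all add: divide_right_mono)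
  have h2: "1 / real (d+1) = 2 * hh d" unfolding hh_def by (simp add: field_simps)
  have h3: "real d / real (d+1) = 1 - 2 * hh d" unfolding hh_def by (simp add: field_simps)
  have "0 \<le> frac (y - th d j1)" "0 \<le> frac (y - th d j2)" by simp_all
  have hpos: "hh d > 0" unfolding hh_def by simp
  have "of_int N \<ge> hh d" using e lo h2 b1 b2 \<open>0 \<le> frac (y - th d j2)\<close> by linarith
  then have "real_of_int N > 0" using hpos by linarith
  then have "N > 0" by simp
  then have "real_of_int N \<ge> 1" by simp
  moreover have "of_int N \<le> 1 - hh d" using e hi h3 b1 b2 \<open>0 \<le> frac (y - th d j1)\<close> by linarith
  ultimately show False using hpos by linarith
qed



lemma shift_lemma:
  fixes y e :: real and K :: int and m :: nat
  assumes "\<bar>e\<bar> < frac y - h" "\<bar>e\<bar> < 1 - frac y" "0 \<le> h"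
  shows "\<lfloor>y + e + of_int (int m * K)\<rfloor> mod int m = \<lfloor>y\<rfloor> mod int m"
    and "frac (y + e + of_int (int m * K)) = frac y + e"
proof -
  have f: "\<lfloor>y + e\<rfloor> = \<lfloor>y\<rfloor>"
    unfolding floor_eq_iff using assms frac_def[of y] by (smt (verit))
  have g: "\<lfloor>y + e + of_int (int m * K)\<rfloor> = \<lfloor>y\<rfloor> + int m * K"
    using f by (metis floor_add_int)
  show "\<lfloor>y + e + of_int (int m * K)\<rfloor> mod int m = \<lfloor>y\<rfloor> mod int m"
    unfolding g by simp
  show "frac (y + e + of_int (int m * K)) = frac y + e"
    unfolding frac_def g by simp
qed

lemma cd_neg: "cd (- t) = cd t"
proof -
  have "cd (- t) \<le> \<bar>- t - of_int (- round t)\<bar>" by (rule cd_le)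
  also have "\<dots> = cd t" unfolding cd_def by simp
  finally have 1: "cd (- t) \<le> cd t" .
  have "cd t \<le> \<bar>t - of_int (- round (-t))\<bar>" by (rule cd_le)
  also have "\<dots> = cd (-t)" unfolding cd_def by simp
  finally show ?thesis using 1 by simp
qed

lemma Wset_open:
  assumes n: "n \<ge> 1" and m: "m \<ge> 1"
  shows "openin (Metric_space.mtopology (torus_pow n) (linf_dist n)) (Wset n m j k)"
proof -
  interpret Metric_space "torus_pow n" "linf_dist n" by (rule linf_metric[OF n])
  define Oc where "Oc c = {x \<in> torus_pow n. \<lfloor>real m * coord x c - th (2*n) j\<rfloor> mod int m = k c
        \<and> frac (real m * coord x c - th (2*n) j) > hh (2*n)}" for c
  have W: "Wset n m j k = (\<Inter>c\<in>{..<2*n}. Oc c)"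
  proof -
    have "0 \<in> {..<2*n}" using n by simp
    then show ?thesis unfolding Wset_def Oc_def by blast
  qed
  have hpos: "0 \<le> hh (2*n)" unfolding hh_def by simp
  have "openin mtopology (Oc c)" if c: "c < 2*n" for c
    unfolding openin_mtopology
  proof (intro conjI allI impI)
    show "Oc c \<subseteq> torus_pow n" unfolding Oc_def by auto
    fix x assume x: "x \<in> Oc c"
    define y where "y = real m * coord x c - th (2*n) j"
    define r where "r = min (frac y - hh (2*n)) (1 - frac y) / real m"
    have "frac y > hh (2*n)" using x unfolding Oc_def y_def by auto
    then have r0: "r > 0" unfolding r_def using m frac_lt_1[of y] by simp
    have "mball x r \<subseteq> Oc c"
    proof
      fix z assume z: "z \<in> mball x r"
      then have zt: "z \<in> torus_pow n" and xt: "x \<in> torus_pow n" and lz: "linf_dist n x z < r" by auto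
      define t where "t = coord z c - coord x c"
      define a where "a = round t"
      define dl where "dl = t - of_int a"
      have "cd (coord x c - coord z c) \<le> linf_dist n x z" by (rule coord_cd[OF c])
      then have "cd t < r" using lz unfolding t_def using cd_neg[of "coord z c - coord x c"] by simp
      then have dl: "\<bar>dl\<bar> < r" unfolding dl_def a_def cd_def by simp
      have e1: "\<bar>real m * dl\<bar> < frac y - hh (2*n)" "\<bar>real m * dl\<bar> < 1 - frac y"
        using dl m unfolding r_def by (auto simp: abs_mult field_simps)
      have eq: "real m * coord z c - th (2*n) j = y + real m * dl + of_int (int m * a)"
        unfolding y_def dl_def t_def by (simp add: algebra_simps)
      have s1: "\<lfloor>real m * coord z c - th (2*n) j\<rfloor> mod int m = \<lfloor>y\<rfloor> mod int m"
        unfolding eq by (rule shift_lemma(1)[OF e1 hpos])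
      have s2: "frac (real m * coord z c - th (2*n) j) = frac y + real m * dl"
        unfolding eq by (rule shift_lemma(2)[OF e1 hpos])
      have hx: "\<lfloor>y\<rfloor> mod int m = k c" "frac y > hh (2*n)" using x unfolding Oc_def y_def by auto
      have "frac y + real m * dl > hh (2*n)" using e1 by linarith
      then show "z \<in> Oc c"
        unfolding Oc_def using zt s1 s2 hx by simp
    qed
    then show "\<exists>r>0. mball x r \<subseteq> Oc c" using r0 by blast
  qed
  then show ?thesis unfolding W using n by (intro openin_INT2) (auto simp: lessThan_empty_iff)
qed



lemma Wset_coord_close:
  assumes m: "m \<ge> 1" and x: "x \<in> Wset n m j k" and z: "z \<in> Wset n m j k" and c: "c < 2*n"
  shows "\<exists>a::int. \<bar>coord x c - coord z c - of_int a\<bar> < 1 / real m"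
proof -
  define yx where "yx = real m * coord x c - th (2*n) j"
  define yz where "yz = real m * coord z c - th (2*n) j"
  have "\<lfloor>yx\<rfloor> mod int m = \<lfloor>yz\<rfloor> mod int m"
    using x z c unfolding Wset_def yx_def yz_def by auto
  then have "int m dvd \<lfloor>yx\<rfloor> - \<lfloor>yz\<rfloor>" by (simp add: mod_eq_dvd_iff)
  then obtain a where a: "\<lfloor>yx\<rfloor> - \<lfloor>yz\<rfloor> = int m * a" by (elim dvdE)
  have "real m * (coord x c - coord z c - of_int a) = frac yx - frac yz"
  proof -
    have "real m * (coord x c - coord z c - of_int a) = yx - yz - real_of_int (int m * a)"
      unfolding yx_def yz_def by (simp add: algebra_simps)
    also have "\<dots> = frac yx - frac yz" unfolding a[symmetric] frac_def by simp
    finally show ?thesis .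
  qed
  moreover have "\<bar>frac yx - frac yz\<bar> < 1" using frac_lt_1[of yx] frac_lt_1[of yz] frac_ge_0[of yx] frac_ge_0[of yz] by linarith
  ultimately have "real m * \<bar>coord x c - coord z c - of_int a\<bar> < 1" by (simp add: abs_mult)
  then have "\<bar>coord x c - coord z c - of_int a\<bar> < 1 / real m" using m by (simp add: field_simps)
  then show ?thesis by blast
qed

lemma Wset_diam:
  assumes n: "n \<ge> 1" and m: "m \<ge> 1" and me: "2 / real m \<le> \<epsilon>"
    and x: "x \<in> Wset n m j k" and z: "z \<in> Wset n m j k"
  shows "linf_dist n x z \<le> \<epsilon>"
  unfolding linf_le_iff[OF n]
proof (intro allI impI)
  fix i assume i: "i < n"
  obtain a1 :: int where a1: "\<bar>coord x (2*i) - coord z (2*i) - of_int a1\<bar> < 1 / real m"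
    using Wset_coord_close[OF m x z, of "2*i"] i by auto
  obtain a2 :: int where a2: "\<bar>coord x (2*i+1) - coord z (2*i+1) - of_int a2\<bar> < 1 / real m"
    using Wset_coord_close[OF m x z, of "2*i+1"] i by auto
  have "torus_dist (x i) (z i) \<le> \<bar>fst (x i) - fst (z i) - of_int a1\<bar> + \<bar>snd (x i) - snd (z i) - of_int a2\<bar>"
    by (rule torus_dist_le_abs)
  also have "\<dots> < 1 / real m + 1 / real m"
    using a1 a2 unfolding coord_even coord_odd by linarith
  also have "\<dots> \<le> \<epsilon>" using me by simp
  finally show "torus_dist (x i) (z i) \<le> \<epsilon>" by simp
qed

lemma Wset_cover:
  assumes m: "m \<ge> 1" and x: "x \<in> torus_pow n"
  shows "\<exists>j\<le>2*n. \<exists>k. x \<in> Wset n m j k"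
proof -
  define d where "d = 2*n"
  define B where "B c = {j. j \<le> d \<and> frac (real m * coord x c - th d j) \<le> hh d}" for c
  have finB: "finite (B c)" for c unfolding B_def by simp
  have cB: "card (B c) \<le> 1" for c
  proof -
    have "\<forall>a\<in>B c. \<forall>b\<in>B c. a = b"
    proof (intro ballI)
      fix a b assume a: "a \<in> B c" and b: "b \<in> B c"
      show "a = b"
      proof (rule linorder_cases[of a b])
        assume "a < b" then show ?thesis using a b bad_unique[of a b d "real m * coord x c"] unfolding B_def by auto
      next
        assume "b < a" then show ?thesis using a b bad_unique[of b a d "real m * coord x c"] unfolding B_def by auto
      qed
    qed
    then show ?thesis using card_le_Suc0_iff_eq[OF finB] by simp
  qed
  have "card (\<Union>c\<in>{..<d}. B c) \<le> (\<Sum>c\<in>{..<d}. card (B c))" by (rule card_UN_le) simp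
  also have "\<dots> \<le> (\<Sum>c\<in>{..<d}. 1)" by (rule sum_mono) (rule cB)
  finally have cU: "card (\<Union>c\<in>{..<d}. B c) \<le> d" by simp
  have "\<exists>j\<le>d. \<forall>c<d. j \<notin> B c"
  proof (rule ccontr)
    assume "\<not> ?thesis"
    then have "{..d} \<subseteq> (\<Union>c\<in>{..<d}. B c)" by auto
    then have "card {..d} \<le> card (\<Union>c\<in>{..<d}. B c)" by (rule card_mono[rotated]) (simp add: finB)
    then show False using cU by simp
  qed
  then obtain j where j: "j \<le> d" "\<And>c. c < d \<Longrightarrow> j \<notin> B c" by blast
  define k where "k c = \<lfloor>real m * coord x c - th (2*n) j\<rfloor> mod int m" for c
  have "x \<in> Wset n m j k"
    unfolding Wset_def k_def using x j(1) j(2) unfolding B_def d_def by (auto simp: not_le)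
  then show ?thesis using j(1) unfolding d_def by blast
qed

lemma Wset_order:
  assumes m: "m \<ge> 1"
  shows "cover_order {Wset n m j k | j k. j \<le> 2*n} \<le> enat (2*n)"
  unfolding cover_order_def
proof (rule Sup_least)
  fix e assume "e \<in> {enat m' | m'. \<exists>F. F \<subseteq> {Wset n m j k | j k. j \<le> 2*n} \<and> card F = Suc m' \<and> \<Inter>F \<noteq> {}}"
  then obtain m' F where e: "e = enat m'" and FW: "F \<subseteq> {Wset n m j k | j k. j \<le> 2*n}"
    and cF: "card F = Suc m'" and ne: "\<Inter>F \<noteq> {}" by blast
  obtain x where x: "x \<in> \<Inter>F" using ne by blast
  have "\<forall>V\<in>F. \<exists>j. j \<le> 2*n \<and> (\<exists>k. V = Wset n m j k)" using FW by blast
  then obtain J where J: "\<And>V. V \<in> F \<Longrightarrow> J V \<le> 2*n \<and> (\<exists>k. V = Wset n m (J V) k)" by metis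
  have inj: "inj_on J F"
  proof (rule inj_onI)
    fix V1 V2 assume V: "V1 \<in> F" "V2 \<in> F" and eq: "J V1 = J V2"
    define jj where "jj = J V1"
    obtain k1 where k1: "V1 = Wset n m jj k1" using J[OF V(1)] unfolding jj_def by blast
    obtain k2 where k2: "V2 = Wset n m jj k2" using J[OF V(2)] eq unfolding jj_def by auto
    have xin: "x \<in> V1" "x \<in> V2" using x V by auto
    have kk: "k1 c = k2 c" if "c < 2*n" for c
    proof -
      have "x \<in> Wset n m jj k1" "x \<in> Wset n m jj k2" using xin k1 k2 by simp_all
      then show ?thesis using that unfolding Wset_def by auto
    qed
    have "Wset n m jj k1 = Wset n m jj k2"
      unfolding Wset_def using kk by auto
    then show "V1 = V2" using k1 k2 by simp
  qed
  have "card F \<le> card {..2*n}"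
    by (rule card_inj_on_le[OF inj]) (use J in auto)
  then have "m' \<le> 2*n" using cF by simp
  then show "e \<le> enat (2*n)" using e by simp
qed

theorem lemma5p1:
  fixes n :: nat and \<epsilon> :: real
  assumes "n \<ge> 1" and "0 < \<epsilon>" and "\<epsilon> < 1/2"
  shows "widim \<epsilon> (torus_pow n) (linf_dist n) = enat (2 * n)"
proof -
  note n = assms(1)
  obtain m :: nat where mbig: "real m > 2 / \<epsilon>" using reals_Archimedean2 by blast
  have "2 / \<epsilon> > 0" using assms by simp
  then have "real m > 0" using mbig by linarith
  then have m: "m \<ge> 1" by simp
  have me: "2 / real m \<le> \<epsilon>" using mbig assms(2) \<open>real m > 0\<close> by (simp add: field_simps)
  define S where "S = {U. (\<forall>V\<in>U. openin (Metric_space.mtopology (torus_pow n) (linf_dist n)) V)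
                              \<and> \<Union>U = torus_pow n
                              \<and> (\<forall>V\<in>U. \<forall>x\<in>V. \<forall>y\<in>V. linf_dist n x y \<le> \<epsilon>)}"
  define W where "W = {Wset n m j k | j k. j \<le> 2*n}"
  have WS: "W \<in> S"
    unfolding S_def W_def
  proof (intro CollectI conjI ballI)
    fix V assume "V \<in> {Wset n m j k | j k. j \<le> 2*n}"
    then obtain j k where V: "V = Wset n m j k" by blast
    show "openin (Metric_space.mtopology (torus_pow n) (linf_dist n)) V"
      unfolding V by (rule Wset_open[OF n m])
    fix x y assume "x \<in> V" "y \<in> V"
    then show "linf_dist n x y \<le> \<epsilon>" unfolding V by (rule Wset_diam[OF n m me])
  next
    show "\<Union>{Wset n m j k | j k. j \<le> 2*n} = torus_pow n"
    proof
      show "\<Union>{Wset n m j k | j k. j \<le> 2*n} \<subseteq> torus_pow n" unfolding Wset_def by auto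
      show "torus_pow n \<subseteq> \<Union>{Wset n m j k | j k. j \<le> 2*n}"
        using Wset_cover[OF m] by blast
    qed
  qed
  have lb: "enat (2*n) \<le> cover_order U" if "U \<in> S" for U
    using that unfolding S_def by (intro lower_bound[OF n assms(2,3)]) auto
  have "widim \<epsilon> (torus_pow n) (linf_dist n) = (INF U\<in>S. cover_order U)"
    unfolding widim_def S_def by simp
  also have "\<dots> = enat (2*n)"
  proof (rule antisym)
    show "(INF U\<in>S. cover_order U) \<le> enat (2*n)"
      using WS Wset_order[OF m, of n] unfolding W_def by (meson INF_lower2)
    show "enat (2*n) \<le> (INF U\<in>S. cover_order U)"
      by (rule INF_greatest) (rule lb)
  qed
  finally show ?thesis .
qed


end
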